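(* Let $f=Fe_3F^*:D\to S^3_1$ be a CMC $1$ face with Weierstrass data $(g,\omega=h\,dz)$ and holomorphic null lift $F$, let $\varphi=dg/(g^2\omega)$, and let $p$ be a non-degenerate singular point. Then, with $\xi=\sqrt{-1}\,\overline{(g_z/g)}\,\partial_z-\sqrt{-1}\,(g_z/g)\,\partial_{\bar z}$, $$\xi f(p)=2|h(p)|^2\operatorname{Im}\varphi(p)\;F(p)\begin{pmatrix}1&g(p)\\\overline{g(p)}&1\end{pmatrix}F(p)^*.$$
   Context: $S^3_1=\{X\in\mathrm{Herm}(2):\det X=-1\}$. Given a domain $D\subset\mathbb{C}$, meromorphic $g$ and holomorphic $\omega=h\,dz$ with $(1+|g|^2)^2|\omega|^2$ Riemannian and $1-|g|^2\not\equiv0$, $F:D\to SL(2,\mathbb{C})$ is holomorphic with $F^{-1}dF=\begin{pmatrix}g&-g^2\\1&-g\end{pmatrix}\omega$, and $f=Fe_3F^*$, $e_3=\mathrm{diag}(1,-1)$, $F^*=\bar F^T$. Singular points are those with $|g|=1$; non-degenerate means additionally $dg(p)\ne0$. $\xi f$ denotes the directional derivative of the matrix-valued map $f$ along $\xi$. *)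

theory Defs
  imports "HOL-Complex_Analysis.Complex_Analysis"
begin

type_synonym cmat = "complex ^ 2 ^ 2"

definition mat2 :: "complex \<Rightarrow> complex \<Rightarrow> complex \<Rightarrow> complex \<Rightarrow> cmat" where
  "mat2 a b c d = (\<chi> i j. if i = 1 then (if j = 1 then a else b) else (if j = 1 then c else d))"

definition adjm :: "cmat \<Rightarrow> cmat" where
  "adjm A = (\<chi> i j. cnj (A $ j $ i))"

definition e3 :: cmat where "e3 = mat2 1 0 0 (-1)"

(* the coefficient matrix of F^{-1} dF = [[g,-g^2],[1,-g]] h dz *)
definition lift_coeff :: "complex \<Rightarrow> complex \<Rightarrow> cmat" where
  "lift_coeff gz hz = mat2 (gz * hz) (- (gz^2) * hz) hz (- gz * hz)"

definition cmc1_face_data ::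
  "complex set \<Rightarrow> (complex \<Rightarrow> complex) \<Rightarrow> (complex \<Rightarrow> complex) \<Rightarrow> (complex \<Rightarrow> cmat) \<Rightarrow> bool" where
  "cmc1_face_data D g h F \<longleftrightarrow>
     open D \<and> connected D \<and> D \<noteq> {} \<and>
     g meromorphic_on D \<and>
     (\<forall>z\<in>D. \<not> is_pole g z \<longrightarrow> isCont g z) \<and>
     h holomorphic_on D \<and>
     (\<forall>z\<in>D. \<exists>L>0. ((\<lambda>w. (1 + (cmod (g w))\<^sup>2)\<^sup>2 * (cmod (h w))\<^sup>2) \<longlongrightarrow> L) (at z)) \<and>
     (\<exists>z\<in>D. \<not> is_pole g z \<and> 1 - (cmod (g z))\<^sup>2 \<noteq> 0) \<and>
     (\<forall>i j. (\<lambda>w. F w $ i $ j) holomorphic_on D) \<and>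
     (\<forall>z\<in>D. det (F z) = 1) \<and>
     (\<forall>z\<in>D. \<not> is_pole g z \<longrightarrow>
        (\<forall>i j. ((\<lambda>w. F w $ i $ j) has_field_derivative (F z ** lift_coeff (g z) (h z)) $ i $ j) (at z)))"

definition face :: "(complex \<Rightarrow> cmat) \<Rightarrow> complex \<Rightarrow> cmat" where
  "face F z = F z ** e3 ** adjm (F z)"

end

theory Submission
  imports Defs
begin
no_notation fps_nth (infixl \<open>$\<close> 75)

lemma mat2_nth: "mat2 a b c d $ i $ j = (if i = 1 then (if j = 1 then a else b) else (if j = 1 then c else d))"
  by (simp add: mat2_def)

lemma mat_eq_mat2: "(A::cmat) = mat2 (A$1$1) (A$1$2) (A$2$1) (A$2$2)"
  by (simp add: vec_eq_iff mat2_nth forall_2)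

lemma face_eq: "face F z = mat2
  (F z$1$1*cnj (F z$1$1) - F z$1$2*cnj (F z$1$2)) (F z$1$1*cnj (F z$2$1) - F z$1$2*cnj (F z$2$2))
  (F z$2$1*cnj (F z$1$1) - F z$2$2*cnj (F z$1$2)) (F z$2$1*cnj (F z$2$1) - F z$2$2*cnj (F z$2$2))"
  by (simp add: face_def vec_eq_iff forall_2 mat2_nth matrix_matrix_mult_def adjm_def e3_def UNIV_2)

lemma prod_eq: "(A::cmat) ** B = mat2 (A$1$1*B$1$1 + A$1$2*B$2$1) (A$1$1*B$1$2 + A$1$2*B$2$2)
   (A$2$1*B$1$1 + A$2$2*B$2$1) (A$2$1*B$1$2 + A$2$2*B$2$2)"
  by (simp add: vec_eq_iff forall_2 mat2_nth matrix_matrix_mult_def UNIV_2)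

lemma has_derivative_vec_comp:
  fixes f :: "'a::real_normed_vector \<Rightarrow> 'b::real_normed_vector ^ 'n"
  assumes d: "\<And>i. ((\<lambda>x. f x $ i) has_derivative (\<lambda>v. f' v $ i)) (at x)"
  shows "(f has_derivative f') (at x)"
proof -
  have bl: "\<And>i. bounded_linear (\<lambda>v. f' v $ i)" using d has_derivative_bounded_linear by blast
  have lin: "linear f'"
    by (rule linearI) (use bl in \<open>auto simp: vec_eq_iff linear_add linear_scale bounded_linear.linear
        intro: linear_add[OF bounded_linear.linear] linear_scale[OF bounded_linear.linear]\<close>)
  have "\<And>i. \<exists>K. \<forall>v. norm (f' v $ i) \<le> norm v * K" using bl bounded_linear.bounded by blast
  then obtain K where K: "\<And>i v. norm (f' v $ i) \<le> norm v * K i" by metis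
  have "bounded_linear f'"
  proof (rule bounded_linear_intro)
    fix v w :: 'a and r :: real
    show "f' (v + w) = f' v + f' w" using lin by (simp add: linear_add)
    show "f' (r *\<^sub>R v) = r *\<^sub>R f' v" using lin by (simp add: linear_scale)
    have "norm (f' v) \<le> (\<Sum>i\<in>UNIV. norm (f' v $ i))" by (simp add: norm_vec_def L2_set_le_sum)
    also have "\<dots> \<le> (\<Sum>i\<in>UNIV. norm v * K i)" by (rule sum_mono) (rule K)
    also have "\<dots> = norm v * sum K UNIV" by (simp add: sum_distrib_left)
    finally show "norm (f' v) \<le> norm v * sum K UNIV" .
  qed
  moreover have "((\<lambda>y. ((f y - f x) - f' (y - x)) /\<^sub>R norm (y - x)) \<longlongrightarrow> 0) (at x within UNIV)"
  proof (rule vec_tendstoI)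
    fix i
    have "((\<lambda>y. ((f y $ i - f x $ i) - f' (y - x) $ i) /\<^sub>R norm (y - x)) \<longlongrightarrow> 0) (at x within UNIV)"
      using d[of i] by (simp only: has_derivative_at_within)
    then show "((\<lambda>y. (((f y - f x) - f' (y - x)) /\<^sub>R norm (y - x)) $ i) \<longlongrightarrow> 0 $ i) (at x within UNIV)"
      by simp
  qed
  ultimately show ?thesis by (simp only: has_derivative_at_within)
qed


lemma mat2_deriv:
  assumes "(p has_derivative p') (at x)" "(q has_derivative q') (at x)"
    "(r has_derivative r') (at x)" "(s has_derivative s') (at x)"
  shows "((\<lambda>z. mat2 (p z) (q z) (r z) (s z)) has_derivative (\<lambda>v. mat2 (p' v) (q' v) (r' v) (s' v))) (at x)"
proof (rule has_derivative_vec_comp)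
  fix i :: 2
  show "((\<lambda>z. mat2 (p z) (q z) (r z) (s z) $ i) has_derivative (\<lambda>v. mat2 (p' v) (q' v) (r' v) (s' v) $ i)) (at x)"
  proof (rule has_derivative_vec_comp)
    fix j :: 2
    have "i = 1 \<or> i = 2" "j = 1 \<or> j = 2" using exhaust_2 by auto
    then show "((\<lambda>z. mat2 (p z) (q z) (r z) (s z) $ i $ j) has_derivative (\<lambda>v. mat2 (p' v) (q' v) (r' v) (s' v) $ i $ j)) (at x)"
      using assms by (auto simp: mat2_nth)
  qed
qed

lemma ent_deriv:
  assumes "(f has_derivative (\<lambda>v. A* v)) (at p)" "(k has_derivative (\<lambda>v. B* v)) (at p)"
    "(q has_derivative (\<lambda>v. C* v)) (at p)" "(r has_derivative (\<lambda>v. D* v)) (at p)"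
  shows "((\<lambda>w. f w * cnj (k w) - q w * cnj (r w)) has_derivative
    (\<lambda>v. f p * cnj (B* v) + A* v *cnj (k p) - (q p * cnj (D* v) + C* v *cnj (r p)))) (at p)"
  by (intro has_derivative_diff has_derivative_mult bounded_linear.has_derivative[OF bounded_linear_cnj] assms)

lemma adjm_eq: "adjm A = mat2 (cnj (A$1$1)) (cnj (A$2$1)) (cnj (A$1$2)) (cnj (A$2$2))"
  by (simp add: adjm_def vec_eq_iff forall_2 mat2_nth)

lemma Kid:
  fixes G H Q :: complex
  assumes G: "cmod G = 1"
  shows "let K = H * (\<i> * cnj (Q / G)) * G in
    K + cnj K = complex_of_real (2 * (cmod H)\<^sup>2 * Im (Q / (G\<^sup>2 * H)))"
proof (cases "H = 0")
  case True then show ?thesis by simp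
next
  case False
  have G0: "G \<noteq> 0" using G by auto
  have GG: "G * cnj G = 1" using G by (metis complex_norm_square mult.commute of_real_1 power_one)
  have im: "complex_of_real (Im z) = (z - cnj z) / (2 * \<i>)" for z
    by (simp add: complex_eq_iff)
  have hh: "complex_of_real ((cmod H)\<^sup>2) = H * cnj H" by (metis complex_norm_square)
  have "complex_of_real (2 * (cmod H)\<^sup>2 * Im (Q / (G\<^sup>2 * H))) = 2 * (H * cnj H) * ((Q / (G\<^sup>2 * H) - cnj (Q / (G\<^sup>2 * H))) / (2*\<i>))"
    by (simp only: of_real_mult hh im) simp
  also have "\<dots> = H * (\<i> * cnj (Q / G)) * G + cnj (H * (\<i> * cnj (Q / G)) * G)"
    using G0 False GG by (simp add: field_simps) algebra
  finally show ?thesis by (simp add: Let_def)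
qed

theorem lemma4p9:
  fixes D :: "complex set" and g h :: "complex \<Rightarrow> complex" and F :: "complex \<Rightarrow> cmat"
    and p :: complex
  assumes "cmc1_face_data D g h F"
    and "p \<in> D" and "\<not> is_pole g p" and "cmod (g p) = 1" and "deriv g p \<noteq> 0"
  shows "\<exists>f'. (face F has_derivative f') (at p) \<and>
     f' (\<i> * cnj (deriv g p / g p)) =
       (2 * (cmod (h p))\<^sup>2 * Im (deriv g p / ((g p)\<^sup>2 * h p)))
         *\<^sub>R (F p ** mat2 1 (g p) (cnj (g p)) 1 ** adjm (F p))"
proof -
  define X where "X = F p ** lift_coeff (g p) (h p)"
  have dF: "\<And>i j. ((\<lambda>w. F w $ i $ j) has_derivative (\<lambda>v. X $ i $ j * v)) (at p)"
    using assms(1-3) unfolding cmc1_face_data_def X_def has_field_derivative_def by blast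
  define a where "a = F p $ 1 $ 1"
  define b where "b = F p $ 1 $ 2"
  define c where "c = F p $ 2 $ 1"
  define d where "d = F p $ 2 $ 2"
  define G where "G = g p"
  define H where "H = h p"
  have X: "X = mat2 (a*(G*H) + b*H) (a*(- (G^2)*H) + b*(- G*H)) (c*(G*H) + d*H) (c*(- (G^2)*H) + d*(- G*H))"
    unfolding X_def by (simp add: prod_eq lift_coeff_def mat2_nth a_def b_def c_def d_def G_def H_def)
  define f' where "f' = (\<lambda>v. mat2
    (a * cnj (X$1$1* v) + X$1$1* v *cnj a - (b * cnj (X$1$2* v) + X$1$2* v *cnj b))
    (a * cnj (X$2$1* v) + X$1$1* v *cnj c - (b * cnj (X$2$2* v) + X$1$2* v *cnj d))
    (c * cnj (X$1$1* v) + X$2$1* v *cnj a - (d * cnj (X$1$2* v) + X$2$2* v *cnj b))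
    (c * cnj (X$2$1* v) + X$2$1* v *cnj c - (d * cnj (X$2$2* v) + X$2$2* v *cnj d)))"
  have fe: "face F = (\<lambda>z. mat2
  (F z$1$1*cnj (F z$1$1) - F z$1$2*cnj (F z$1$2)) (F z$1$1*cnj (F z$2$1) - F z$1$2*cnj (F z$2$2))
  (F z$2$1*cnj (F z$1$1) - F z$2$2*cnj (F z$1$2)) (F z$2$1*cnj (F z$2$1) - F z$2$2*cnj (F z$2$2)))"
    by (rule ext, rule face_eq)
  have D: "(face F has_derivative f') (at p)"
    unfolding fe f'_def a_def b_def c_def d_def
    by (intro mat2_deriv ent_deriv dF)
  have GG: "G * cnj G = 1" using assms(4) unfolding G_def
    by (metis complex_norm_square mult.commute of_real_1 power_one)
  have sc: "\<And>r (A::cmat). r *\<^sub>R A = mat2 (of_real r * A$1$1) (of_real r * A$1$2) (of_real r * A$2$1) (of_real r * A$2$2)"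
    by (simp add: vec_eq_iff forall_2 mat2_nth scaleR_conv_of_real[where 'a=complex])
  define v where "v = \<i> * cnj (deriv g p / G)"
  have K: "H * v * G + cnj (H * v * G) = complex_of_real (2 * (cmod H)\<^sup>2 * Im (deriv g p / (G\<^sup>2 * H)))"
    using Kid[OF assms(4), of H "deriv g p"] unfolding v_def G_def by (simp add: Let_def)
  have "f' v = (2 * (cmod H)\<^sup>2 * Im (deriv g p / (G\<^sup>2 * H)))
         *\<^sub>R (F p ** mat2 1 G (cnj G) 1 ** adjm (F p))"
    unfolding sc K[symmetric]
    apply (simp add: f'_def X vec_eq_iff forall_2 mat2_nth prod_eq adjm_eq a_def[symmetric] b_def[symmetric]
        c_def[symmetric] d_def[symmetric])
    using GG by algebra
  then show ?thesis using D unfolding v_def G_def H_def by blast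
qed

end
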